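(* Let $\mathcal H=\mathbb C^d$ with orthonormal basis $\{|k\rangle\}_{k=1}^d$. A quantum channel $\mathcal M$ on $M_d(\mathbb C)$ is multiphase covariant if and only if it admits a representation $$\mathcal M(\rho)=\sum_{i=1}^r M_i\rho M_i^\dagger+\sum_{k=1}^d\sum_{j\neq k}p(j|k)\,|j\rangle\langle k|\rho|k\rangle\langle j|,$$ where each $M_i$ is diagonal in the basis $\{|k\rangle\}$ and each $p(j|k)\ge0$.
   Context: For $\boldsymbol\theta\in[0,2\pi)^d$ let $U_{\boldsymbol\theta}=\sum_k e^{i\theta_k}|k\rangle\langle k|$ and $\mathcal U_{\boldsymbol\theta}=U_{\boldsymbol\theta}\cdot U_{\boldsymbol\theta}^\dagger$. A quantum channel $\mathcal M$ is multiphase covariant if $\mathcal U_{\boldsymbol\theta}\circ\mathcal M=\mathcal M\circ\mathcal U_{\boldsymbol\theta}$ for all $\boldsymbol\theta$. *)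

theory Defs
  imports "Jordan_Normal_Form.Matrix" Complex_Main
begin

text \<open>Matrices in M_d(C) are complex d x d matrices (carrier_mat d d); the
basis vector |k> corresponds to index k (0-based, k < d).\<close>

definition dag :: "complex mat \<Rightarrow> complex mat" where
  "dag A = mat (dim_col A) (dim_row A) (\<lambda>(i,j). cnj (A $$ (j,i)))"

definition mtrace :: "complex mat \<Rightarrow> complex" where
  "mtrace A = (\<Sum>i<dim_row A. A $$ (i,i))"

definition msum :: "nat \<Rightarrow> ('i \<Rightarrow> complex mat) \<Rightarrow> 'i set \<Rightarrow> complex mat" where
  "msum d f I = mat d d (\<lambda>(a,b). \<Sum>x\<in>I. f x $$ (a,b))"

definition ketbra :: "nat \<Rightarrow> nat \<Rightarrow> nat \<Rightarrow> complex mat" where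
  "ketbra d j k = mat d d (\<lambda>(a,b). if a = j \<and> b = k then 1 else 0)"

definition psd :: "nat \<Rightarrow> complex mat \<Rightarrow> bool" where
  "psd n A \<longleftrightarrow> A \<in> carrier_mat n n \<and>
     (\<forall>v :: nat \<Rightarrow> complex. let q = (\<Sum>i<n. \<Sum>j<n. cnj (v i) * A $$ (i,j) * v j)
        in Im q = 0 \<and> Re q \<ge> 0)"

text \<open>id_n \<otimes> \<Phi> acting on an (n d) x (n d) block matrix with d x d blocks.\<close>
definition ampl :: "nat \<Rightarrow> nat \<Rightarrow> (complex mat \<Rightarrow> complex mat) \<Rightarrow> complex mat \<Rightarrow> complex mat" where
  "ampl n d \<Phi> X = mat (n*d) (n*d) (\<lambda>(r,c).
      \<Phi> (mat d d (\<lambda>(i,j). X $$ ((r div d)*d + i, (c div d)*d + j))) $$ (r mod d, c mod d))"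

definition linear_map :: "nat \<Rightarrow> (complex mat \<Rightarrow> complex mat) \<Rightarrow> bool" where
  "linear_map d \<Phi> \<longleftrightarrow>
     (\<forall>A\<in>carrier_mat d d. \<forall>B\<in>carrier_mat d d. \<Phi> (A + B) = \<Phi> A + \<Phi> B) \<and>
     (\<forall>A\<in>carrier_mat d d. \<forall>c::complex. \<Phi> (c \<cdot>\<^sub>m A) = c \<cdot>\<^sub>m \<Phi> A)"

definition completely_positive :: "nat \<Rightarrow> (complex mat \<Rightarrow> complex mat) \<Rightarrow> bool" where
  "completely_positive d \<Phi> \<longleftrightarrow>
     (\<forall>n>0. \<forall>X. psd (n*d) X \<longrightarrow> psd (n*d) (ampl n d \<Phi> X))"

definition quantum_channel :: "nat \<Rightarrow> (complex mat \<Rightarrow> complex mat) \<Rightarrow> bool" where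
  "quantum_channel d \<Phi> \<longleftrightarrow>
     (\<forall>A\<in>carrier_mat d d. \<Phi> A \<in> carrier_mat d d) \<and>
     linear_map d \<Phi> \<and> completely_positive d \<Phi> \<and>
     (\<forall>A\<in>carrier_mat d d. mtrace (\<Phi> A) = mtrace A)"

definition phaseU :: "nat \<Rightarrow> (nat \<Rightarrow> real) \<Rightarrow> complex mat" where
  "phaseU d \<theta> = mat d d (\<lambda>(a,b). if a = b then cis (\<theta> a) else 0)"

definition multiphase_covariant :: "nat \<Rightarrow> (complex mat \<Rightarrow> complex mat) \<Rightarrow> bool" where
  "multiphase_covariant d \<Phi> \<longleftrightarrow>
     (\<forall>\<theta>. (\<forall>k<d. 0 \<le> \<theta> k \<and> \<theta> k < 2*pi) \<longrightarrow>
        (\<forall>\<rho>\<in>carrier_mat d d.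
           phaseU d \<theta> * \<Phi> \<rho> * dag (phaseU d \<theta>) = \<Phi> (phaseU d \<theta> * \<rho> * dag (phaseU d \<theta>))))"

end

theory Submission
  imports Defs
begin

definition Qf :: "nat \<Rightarrow> (nat \<Rightarrow> nat \<Rightarrow> complex) \<Rightarrow> (nat \<Rightarrow> complex) \<Rightarrow> complex" where
  "Qf n A v = (\<Sum>i<n. \<Sum>j<n. cnj (v i) * A i j * v j)"

definition psdf :: "nat \<Rightarrow> (nat \<Rightarrow> nat \<Rightarrow> complex) \<Rightarrow> bool" where
  "psdf n A \<longleftrightarrow> (\<forall>v. Im (Qf n A v) = 0 \<and> Re (Qf n A v) \<ge> 0)"

lemma sum_delta_r: "(\<Sum>j<(n::nat). f j * (if j = a then x else 0)) = (if a < n then f a * x else (0::complex))"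
proof -
  have "(\<lambda>j. f j * (if j = a then x else 0)) = (\<lambda>j. if j = a then f a * x else 0)" by auto
  then show ?thesis by (subst (asm) fun_eq_iff) (simp add: sum.delta cong: sum.cong)
qed

lemma sum_delta_l: "(\<Sum>j<(n::nat). (if j = a then x else 0) * f j) = (if a < n then x * f a else (0::complex))"
proof -
  have "(\<lambda>j. (if j = a then x else 0) * f j) = (\<lambda>j. if j = a then x * f a else 0)" by auto
  then show ?thesis by (subst (asm) fun_eq_iff) (simp add: sum.delta cong: sum.cong)
qed

lemma Qf_one:
  assumes "a < n"
  shows "Qf n A (\<lambda>i. if i = a then x else 0) = cnj x * A a a * x"
proof -
  have "cnj (if i = a then x else 0) = (if i = a then cnj x else 0)" for i by auto
  then show ?thesis unfolding Qf_def using assms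
    by (simp add: sum_delta_r sum_delta_l sum_distrib_left[symmetric] sum_distrib_right[symmetric] mult.assoc)
qed

lemma Qf_two:
  assumes "a < n" "b < n" "a \<noteq> b"
  shows "Qf n A (\<lambda>i. if i = a then x else if i = b then y else 0) =
     cnj x * A a a * x + cnj x * A a b * y + cnj y * A b a * x + cnj y * A b b * y"
proof -
  have v: "(\<lambda>i. if i = a then x else if i = b then y else 0) = (\<lambda>i. (if i = a then x else 0) + (if i = b then y else 0))"
    using assms by auto
  have c: "cnj ((if i = a then x else 0) + (if i = b then y else 0)) = (if i = a then cnj x else 0) + (if i = b then cnj y else 0)" for i by auto
  have inner: "(\<Sum>j<n. c * A i j * ((if j = a then x else 0) + (if j = b then y else 0))) = c * (A i a * x + A i b * y)" for c i
    using assms by (simp add: distrib_left sum.distrib sum_delta_r)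
  have outer: "(\<Sum>i<n. ((if i = a then cnj x else 0) + (if i = b then cnj y else 0)) * g i) = cnj x * g a + cnj y * g b" for g
    using assms by (simp add: distrib_right sum.distrib sum_delta_l)
  show ?thesis unfolding Qf_def v c inner outer
    by (simp add: algebra_simps)
qed

lemma Qf_cong: "(\<And>i. i < n \<Longrightarrow> v i = w i) \<Longrightarrow> Qf n A v = Qf n A w"
  unfolding Qf_def by (intro sum.cong refl) auto

lemma Qf_congA: "(\<And>i j. i < n \<Longrightarrow> j < n \<Longrightarrow> A i j = B i j) \<Longrightarrow> Qf n A v = Qf n B v"
  unfolding Qf_def by (intro sum.cong refl) auto

lemma Qf_Suc: "Qf (Suc n) A v = Qf n A v + cnj (v n) * (\<Sum>j<n. A n j * v j)
   + (\<Sum>i<n. cnj (v i) * A i n) * v n + cnj (v n) * A n n * v n"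
  unfolding Qf_def by (simp add: sum.distrib sum_distrib_left sum_distrib_right algebra_simps)

lemma psdf_herm:
  assumes "psdf n A" "a < n" "b < n"
  shows "A a b = cnj (A b a)"
proof (cases "a = b")
  case True
  have "Im (Qf n A (\<lambda>i. if i = a then 1 else 0)) = 0" using assms unfolding psdf_def by blast
  then have "Im (A a a) = 0" using Qf_one[OF assms(2), of A 1] by simp
  then show ?thesis using True by (simp add: complex_eq_iff)
next
  case False
  have "Im (Qf n A (\<lambda>i. if i = a then 1 else if i = b then 1 else 0)) = 0"
    "Im (Qf n A (\<lambda>i. if i = a then 1 else if i = b then \<i> else 0)) = 0"
    "Im (Qf n A (\<lambda>i. if i = a then 1 else 0)) = 0"
    "Im (Qf n A (\<lambda>i. if i = b then 1 else 0)) = 0"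
    using assms unfolding psdf_def by blast+
  then show ?thesis using Qf_two[OF assms(2,3) False, of A] Qf_one[OF assms(2), of A 1] Qf_one[OF assms(3), of A 1]
    by (simp add: complex_eq_iff)
qed

lemma psdf_diag:
  assumes "psdf n A" "a < n"
  shows "Im (A a a) = 0" "Re (A a a) \<ge> 0"
proof -
  have "Im (Qf n A (\<lambda>i. if i = a then 1 else 0)) = 0" "Re (Qf n A (\<lambda>i. if i = a then 1 else 0)) \<ge> 0"
    using assms unfolding psdf_def by blast+
  then show "Im (A a a) = 0" "Re (A a a) \<ge> 0" using Qf_one[OF assms(2), of A 1] by simp_all
qed

lemma psdf_zero:
  assumes "psdf n A" "a < n" "b < n" "A a a = 0"
  shows "A a b = 0"
proof (rule ccontr)
  assume nz: "A a b \<noteq> 0"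
  then have ab: "a \<noteq> b" using assms by auto
  define z where "z = A a b"
  define N where "N = (Re z)^2 + (Im z)^2"
  have Npos: "N > 0" using nz unfolding N_def z_def by (simp add: complex_eq_iff sum_power2_gt_zero_iff)
  define s where "s = (\<bar>Re (A b b)\<bar> + 1) / (2 * N)"
  define t where "t = - (complex_of_real s) * z"
  have hba: "A b a = cnj z" using psdf_herm[OF assms(1,3,2)] unfolding z_def by simp
  have "Re (Qf n A (\<lambda>i. if i = a then t else if i = b then 1 else 0)) \<ge> 0"
    using assms unfolding psdf_def by blast
  also have "Re (Qf n A (\<lambda>i. if i = a then t else if i = b then 1 else 0)) = Re (A b b) - 2 * s * N"
    unfolding Qf_two[OF assms(2,3) ab] hba assms(4) t_def N_def z_def[symmetric]
    by (simp add: algebra_simps power2_eq_square)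
  also have "2 * s * N = \<bar>Re (A b b)\<bar> + 1" unfolding s_def using Npos by simp
  finally show False by linarith
qed

lemma assemble:
  fixes r n :: nat
  assumes B: "\<forall>a<n. \<forall>b<n. B a b = (\<Sum>i<r. m i a * cnj (m i b))"
    and A: "\<forall>a<Suc n. \<forall>b<Suc n. A a b = (if a < n \<and> b < n then B a b else 0) + m0 a * cnj (m0 b)"
  shows "\<exists>(r::nat) m. \<forall>a<Suc n. \<forall>b<Suc n. A a b = (\<Sum>i<r. m i a * cnj (m i b))"
proof -
  define mm where "mm = (\<lambda>i a. if i < r then (if a < n then m i a else 0) else m0 a)"
  have "A a b = (\<Sum>i<Suc r. mm i a * cnj (mm i b))" if ab: "a < Suc n" "b < Suc n" for a b
  proof -
    have s1: "(\<Sum>i<Suc r. mm i a * cnj (mm i b)) = (\<Sum>i<r. mm i a * cnj (mm i b)) + m0 a * cnj (m0 b)"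
      unfolding sum.lessThan_Suc by (simp add: mm_def)
    have s2: "(\<Sum>i<r. mm i a * cnj (mm i b)) = (if a < n \<and> b < n then B a b else 0)"
    proof (cases "a < n \<and> b < n")
      case True
      then have "B a b = (\<Sum>i<r. m i a * cnj (m i b))" using B by blast
      moreover have "(\<Sum>i<r. mm i a * cnj (mm i b)) = (\<Sum>i<r. m i a * cnj (m i b))"
        using True by (intro sum.cong) (auto simp: mm_def)
      ultimately show ?thesis using True by simp
    next
      case False
      then have "(\<Sum>i<r. mm i a * cnj (mm i b)) = 0" by (intro sum.neutral) (auto simp: mm_def)
      moreover from False have "(if a < n \<and> b < n then B a b else 0) = 0" by (rule if_not_P)
      ultimately show ?thesis by simp
    qed
    have "A a b = (if a < n \<and> b < n then B a b else 0) + m0 a * cnj (m0 b)" using A ab by blast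
    with s1 s2 show ?thesis by simp
  qed
  then have "\<forall>a<Suc n. \<forall>b<Suc n. A a b = (\<Sum>i<Suc r. mm i a * cnj (mm i b))" by blast
  then show ?thesis by (rule exI[where x="Suc r", OF exI[where x=mm]])
qed

lemma schur_psdf:
  assumes P: "psdf (Suc n) A" and c: "A n n \<noteq> 0"
  shows "psdf n (\<lambda>a b. A a b - A a n * A n b / A n n)"
  unfolding psdf_def
proof
  fix v
  let ?c = "A n n"
  let ?B = "\<lambda>a b. A a b - A a n * A n b / A n n"
  have cr: "cnj ?c = ?c" using psdf_diag(1)[OF P, of n] by (simp add: complex_eq_iff)
  define s where "s = (\<Sum>j<n. A n j * v j)"
  define t where "t = - s / ?c"
  define w where "w = v(n := t)"
  have s': "(\<Sum>i<n. cnj (w i) * A i n) = cnj s"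
    unfolding s_def w_def cnj_sum
    by (intro sum.cong refl) (simp add: psdf_herm[OF P, of _ n] mult.commute)
  have sw: "(\<Sum>j<n. A n j * w j) = s" unfolding s_def w_def by (intro sum.cong refl) simp
  have Qw: "Qf n A w = Qf n A v" unfolding w_def by (rule Qf_cong) simp
  have e1: "Qf (Suc n) A w = Qf n A v - cnj s * s / ?c"
    unfolding Qf_Suc s' sw Qw
    using c cr by (simp add: w_def t_def field_simps)
  have e2: "Qf n ?B v = Qf n A v - cnj s * s / ?c"
  proof -
    have "Qf n ?B v = Qf n A v - (\<Sum>i<n. \<Sum>j<n. (cnj (v i) * A i n) * (A n j * v j) / ?c)"
      unfolding Qf_def by (simp add: sum_subtractf[symmetric] algebra_simps)
    also have "(\<Sum>i<n. \<Sum>j<n. (cnj (v i) * A i n) * (A n j * v j) / ?c) = (\<Sum>i<n. cnj (v i) * A i n) * s / ?c"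
      unfolding s_def by (simp add: sum_divide_distrib[symmetric] sum_product)
    also have "(\<Sum>i<n. cnj (v i) * A i n) = cnj s"
      unfolding s_def cnj_sum by (intro sum.cong refl) (simp add: psdf_herm[OF P, of _ n] mult.commute)
    finally show ?thesis .
  qed
  have "Im (Qf (Suc n) A w) = 0 \<and> Re (Qf (Suc n) A w) \<ge> 0" using P unfolding psdf_def by blast
  then show "Im (Qf n ?B v) = 0 \<and> Re (Qf n ?B v) \<ge> 0" using e1 e2 by simp
qed

lemma gram: "psdf n A \<Longrightarrow> \<exists>(r::nat) m. \<forall>a<n. \<forall>b<n. A a b = (\<Sum>i<r. m i a * cnj (m i b))"
proof (induction n arbitrary: A)
  case 0
  show ?case by (rule exI[where x=0], rule exI[where x="\<lambda>_ _. 0"]) simp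
next
  case (Suc n A)
  note P = Suc.prems
  show ?case
  proof (cases "A n n = 0")
    case True
    have z1: "A n b = 0" if "b < Suc n" for b using psdf_zero[OF P _ that True] by simp
    have z2: "A b n = 0" if "b < Suc n" for b using psdf_herm[OF P that, of n] z1[OF that] by simp
    have "psdf n A" unfolding psdf_def
    proof
      fix v
      let ?w = "\<lambda>i. if i < n then v i else (0::complex)"
      have q: "Qf n A ?w = Qf n A v" by (rule Qf_cong) simp
      have "Qf (Suc n) A ?w = Qf n A v"
        unfolding Qf_Suc q by simp
      moreover have "Im (Qf (Suc n) A ?w) = 0 \<and> Re (Qf (Suc n) A ?w) \<ge> 0" using P unfolding psdf_def by blast
      ultimately show "Im (Qf n A v) = 0 \<and> Re (Qf n A v) \<ge> 0" by simp
    qed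
    then obtain r :: nat and m where rm: "\<forall>a<n. \<forall>b<n. A a b = (\<Sum>i<r. m i a * cnj (m i b))" using Suc.IH[OF \<open>psdf n A\<close>] by (elim exE) blast
    have "\<forall>a<Suc n. \<forall>b<Suc n. A a b = (if a < n \<and> b < n then A a b else 0) + (\<lambda>_. 0) a * cnj ((\<lambda>_. 0) b)"
    proof (intro allI impI)
      fix a b assume a: "a < Suc n" and b: "b < Suc n"
      show "A a b = (if a < n \<and> b < n then A a b else 0) + (\<lambda>_. 0) a * cnj ((\<lambda>_. 0) b)"
      proof (cases "a < n \<and> b < n")
        case True then show ?thesis by simp
      next
        case False
        then have "a = n \<or> b = n" using a b by linarith
        then have "A a b = 0" using z1[OF b] z2[OF a] by (elim disjE) simp_all
        moreover from False have "(if a < n \<and> b < n then A a b else 0) = 0" by (rule if_not_P)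
        ultimately show ?thesis by simp
      qed
    qed
    from assemble[OF rm this] show ?thesis .
  next
    case False
    let ?c = "A n n"
    have ci: "Im ?c = 0" and cr: "Re ?c \<ge> 0" using psdf_diag[OF P, of n] by auto
    have cpos: "Re ?c > 0" using False ci cr by (simp add: complex_eq_iff)
    have cof: "?c = complex_of_real (Re ?c)" using ci by (simp add: complex_eq_iff)
    define B where "B = (\<lambda>a b. A a b - A a n * A n b / A n n)"
    have "psdf n B" unfolding B_def by (rule schur_psdf[OF P False])
    then obtain r :: nat and m where rm: "\<forall>a<n. \<forall>b<n. B a b = (\<Sum>i<r. m i a * cnj (m i b))" using Suc.IH[OF \<open>psdf n B\<close>] by (elim exE) blast
    define m0 where "m0 = (\<lambda>a. A a n / complex_of_real (sqrt (Re ?c)))"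
    have mm: "m0 a * cnj (m0 b) = A a n * A n b / ?c" if "b < Suc n" for a b
    proof -
      have "cnj (A b n) = A n b" using psdf_herm[OF P _ that, of n] by simp
      moreover have "complex_of_real (sqrt (Re ?c)) * complex_of_real (sqrt (Re ?c)) = ?c"
      proof -
        have "complex_of_real (sqrt (Re ?c)) * complex_of_real (sqrt (Re ?c)) = complex_of_real (Re ?c)"
          using cpos by (simp flip: of_real_mult)
        also have "\<dots> = ?c" using cof[symmetric] .
        finally show ?thesis .
      qed
      ultimately show ?thesis unfolding m0_def by (simp add: field_simps)
    qed
    have "\<forall>a<Suc n. \<forall>b<Suc n. A a b = (if a < n \<and> b < n then B a b else 0) + m0 a * cnj (m0 b)"
    proof (intro allI impI)
      fix a b assume a: "a < Suc n" and b: "b < Suc n"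
      show "A a b = (if a < n \<and> b < n then B a b else 0) + m0 a * cnj (m0 b)"
      proof (cases "a < n \<and> b < n")
        case True then show ?thesis unfolding mm[OF b] B_def by simp
      next
        case F: False
        then have "a = n \<or> b = n" using a b by linarith
        then have "A a b = A a n * A n b / A n n" using False by (elim disjE) simp_all
        moreover from F have "(if a < n \<and> b < n then B a b else 0) = 0" by (rule if_not_P)
        ultimately show ?thesis unfolding mm[OF b] by simp
      qed
    qed
    from assemble[OF rm this] show ?thesis .
  qed
qed

lemma mult_entry:
  assumes "A \<in> carrier_mat d d" "B \<in> carrier_mat d d" "i < d" "j < d"
  shows "(A * B) $$ (i,j) = (\<Sum>t<d. A $$ (i,t) * B $$ (t,j))"
  using assms by (simp add: scalar_prod_def atLeast0LessThan)

lemma sum_single: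
  assumes "k < (d::nat)" "\<And>t. t < d \<Longrightarrow> t \<noteq> k \<Longrightarrow> f t = (0::complex)"
  shows "(\<Sum>t<d. f t) = f k"
proof -
  have "(\<Sum>t<d. f t) = (\<Sum>t<d. if t = k then f k else 0)"
    using assms(2) by (intro sum.cong refl) auto
  then show ?thesis using assms(1) by simp
qed

lemma dag_carrier[simp]: "A \<in> carrier_mat n m \<Longrightarrow> dag A \<in> carrier_mat m n"
  unfolding dag_def by simp

lemma dag_entry: "A \<in> carrier_mat n m \<Longrightarrow> i < m \<Longrightarrow> j < n \<Longrightarrow> dag A $$ (i,j) = cnj (A $$ (j,i))"
  unfolding dag_def by simp

lemma diag_conj:
  assumes D: "D \<in> carrier_mat d d" "diagonal_mat D" and R: "\<rho> \<in> carrier_mat d d"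
    and ij: "i < d" "j < d"
  shows "(D * \<rho> * dag D) $$ (i,j) = D $$ (i,i) * \<rho> $$ (i,j) * cnj (D $$ (j,j))"
proof -
  have dz: "D $$ (a,b) = 0" if "a < d" "b < d" "a \<noteq> b" for a b
    using D that unfolding diagonal_mat_def by auto
  have e1: "(D * \<rho>) $$ (i,t) = D $$ (i,i) * \<rho> $$ (i,t)" if "t < d" for t
    unfolding mult_entry[OF D(1) R ij(1) that] by (rule sum_single[OF ij(1)]) (simp add: dz ij)
  have "(D * \<rho> * dag D) $$ (i,j) = (\<Sum>t<d. (D * \<rho>) $$ (i,t) * dag D $$ (t,j))"
    by (rule mult_entry) (use D R ij in auto)
  also have "\<dots> = (\<Sum>t<d. D $$ (i,i) * \<rho> $$ (i,t) * cnj (D $$ (j,t)))"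
    by (intro sum.cong refl) (simp add: e1 dag_entry[OF D(1)] ij)
  also have "\<dots> = D $$ (i,i) * \<rho> $$ (i,j) * cnj (D $$ (j,j))"
    by (rule sum_single[OF ij(2)]) (simp add: dz ij)
  finally show ?thesis .
qed

lemma ketbra_carrier[simp]: "ketbra d j k \<in> carrier_mat d d"
  unfolding ketbra_def by simp

lemma ketbra_dims[simp]: "dim_row (ketbra d j k) = d" "dim_col (ketbra d j k) = d"
  unfolding ketbra_def by simp_all

lemma ketbra_entry: "a < d \<Longrightarrow> b < d \<Longrightarrow> ketbra d j k $$ (a,b) = (if a = j \<and> b = k then 1 else 0)"
  unfolding ketbra_def by simp

lemma ketbra_conj:
  assumes R: "\<rho> \<in> carrier_mat d d" and "j < d" "k < d" "a < d" "b < d"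
  shows "(ketbra d j k * \<rho> * ketbra d k j) $$ (a,b) = (if a = j \<and> b = j then \<rho> $$ (k,k) else 0)"
proof -
  have e1: "(ketbra d j k * \<rho>) $$ (a,t) = (if a = j then \<rho> $$ (k,t) else 0)" if "t < d" for t
    unfolding mult_entry[OF ketbra_carrier R assms(4) that]
    by (rule trans[OF sum_single[OF assms(3)]]) (simp_all add: ketbra_entry assms)
  have "(ketbra d j k * \<rho> * ketbra d k j) $$ (a,b) = (\<Sum>t<d. (ketbra d j k * \<rho>) $$ (a,t) * ketbra d k j $$ (t,b))"
    by (rule mult_entry[OF mult_carrier_mat[OF ketbra_carrier R] ketbra_carrier assms(4,5)])
  also have "\<dots> = (\<Sum>t<d. (if a = j then \<rho> $$ (k,t) else 0) * (if t = k \<and> b = j then 1 else 0))"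
    by (intro sum.cong refl) (simp add: e1 ketbra_entry assms)
  also have "\<dots> = (if a = j then \<rho> $$ (k,k) else 0) * (if k = k \<and> b = j then 1 else 0)"
    by (rule sum_single[OF assms(3)]) simp
  finally show ?thesis by simp
qed

lemma phaseU_carrier[simp]: "phaseU d \<theta> \<in> carrier_mat d d"
  unfolding phaseU_def by simp

lemma phaseU_dims[simp]: "dim_row (phaseU d \<theta>) = d" "dim_col (phaseU d \<theta>) = d"
  unfolding phaseU_def by simp_all

lemma dag_dims[simp]: "dim_row (dag A) = dim_col A" "dim_col (dag A) = dim_row A"
  unfolding dag_def by simp_all

lemma phaseU_diag: "diagonal_mat (phaseU d \<theta>)"
  unfolding phaseU_def diagonal_mat_def by simp

lemma phase_conj:
  assumes R: "\<rho> \<in> carrier_mat d d" and ij: "i < d" "j < d"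
  shows "(phaseU d \<theta> * \<rho> * dag (phaseU d \<theta>)) $$ (i,j) = cis (\<theta> i) * \<rho> $$ (i,j) * cnj (cis (\<theta> j))"
  using diag_conj[OF phaseU_carrier phaseU_diag R ij, of \<theta>] ij by (simp add: phaseU_def)

lemma phase_conj_carrier[simp]: "\<rho> \<in> carrier_mat d d \<Longrightarrow> phaseU d \<theta> * \<rho> * dag (phaseU d \<theta>) \<in> carrier_mat d d"
  by (metis dag_carrier mult_carrier_mat phaseU_carrier)

lemma msum_entry: "a < d \<Longrightarrow> b < d \<Longrightarrow> msum d f I $$ (a,b) = (\<Sum>x\<in>I. f x $$ (a,b))"
  unfolding msum_def by simp

lemma msum_dims[simp]: "dim_row (msum d f I) = d" "dim_col (msum d f I) = d"
  unfolding msum_def by simp_all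

lemma msum_carrier[simp]: "msum d f I \<in> carrier_mat d d"
  unfolding msum_def by simp

lemma pairs_Sigma: "{(k,j). k < d \<and> j < d \<and> j \<noteq> k} = Sigma {..<d} (\<lambda>k. {j. j < d \<and> j \<noteq> k})"
  by auto

lemma rep_entry:
  fixes p :: "nat \<Rightarrow> nat \<Rightarrow> real"
  assumes Ms: "\<forall>i<r. Ms i \<in> carrier_mat d d \<and> diagonal_mat (Ms i)" and R: "\<rho> \<in> carrier_mat d d"
    and ab: "a < d" "b < d"
  shows "(msum d (\<lambda>i. Ms i * \<rho> * dag (Ms i)) {..<r}
                + msum d (\<lambda>(k,j). complex_of_real (p j k) \<cdot>\<^sub>m
                      (ketbra d j k * \<rho> * ketbra d k j))
                    {(k,j). k < d \<and> j < d \<and> j \<noteq> k}) $$ (a,b)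
   = (\<Sum>i<r. Ms i $$ (a,a) * cnj (Ms i $$ (b,b))) * \<rho> $$ (a,b)
     + (if a = b then (\<Sum>k<d. if k \<noteq> a then complex_of_real (p a k) * \<rho> $$ (k,k) else 0) else 0)"
proof -
  have s1: "msum d (\<lambda>i. Ms i * \<rho> * dag (Ms i)) {..<r} $$ (a,b) = (\<Sum>i<r. Ms i $$ (a,a) * cnj (Ms i $$ (b,b))) * \<rho> $$ (a,b)"
    unfolding msum_entry[OF ab] sum_distrib_right
    by (intro sum.cong refl) (simp add: diag_conj[OF _ _ R ab] Ms)
  have pc: "(ketbra d j k * \<rho> * ketbra d k j) \<in> carrier_mat d d" for j k
    using R by (metis ketbra_carrier mult_carrier_mat)
  have sm: "(c \<cdot>\<^sub>m (ketbra d j k * \<rho> * ketbra d k j)) $$ (a,b) = c * (if a = j \<and> b = j then \<rho> $$ (k,k) else 0)"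
    if "j < d" "k < d" for c j k
  proof -
    have "dim_row (ketbra d j k * \<rho> * ketbra d k j) = d" "dim_col (ketbra d j k * \<rho> * ketbra d k j) = d"
      using pc[of j k] by auto
    then show ?thesis using ab by (simp add: ketbra_conj[OF R that ab])
  qed
  have s2: "msum d (\<lambda>(k,j). complex_of_real (p j k) \<cdot>\<^sub>m (ketbra d j k * \<rho> * ketbra d k j))
                    {(k,j). k < d \<and> j < d \<and> j \<noteq> k} $$ (a,b)
        = (\<Sum>k<d. \<Sum>j\<in>{j. j < d \<and> j \<noteq> k}. complex_of_real (p j k) * (if a = j \<and> b = j then \<rho> $$ (k,k) else 0))"
    unfolding msum_entry[OF ab] pairs_Sigma
    by (subst sum.Sigma) (auto intro!: sum.cong simp: sm)
  have s3: "(\<Sum>j\<in>{j. j < d \<and> j \<noteq> k}. complex_of_real (p j k) * (if a = j \<and> b = j then \<rho> $$ (k,k) else 0))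
     = (if a = b \<and> k \<noteq> a then complex_of_real (p a k) * \<rho> $$ (k,k) else 0)" for k
  proof -
    have "(\<Sum>j\<in>{j. j < d \<and> j \<noteq> k}. complex_of_real (p j k) * (if a = j \<and> b = j then \<rho> $$ (k,k) else 0))
       = (\<Sum>j\<in>{j. j < d \<and> j \<noteq> k}. if j = a then (if a = b then complex_of_real (p a k) * \<rho> $$ (k,k) else 0) else 0)"
      by (intro sum.cong refl) auto
    also have "\<dots> = (if a = b \<and> k \<noteq> a then complex_of_real (p a k) * \<rho> $$ (k,k) else 0)"
      using ab by (simp add: sum.delta)
    finally show ?thesis .
  qed
  have s4: "(\<Sum>k<d. (if a = b \<and> k \<noteq> a then complex_of_real (p a k) * \<rho> $$ (k,k) else 0))
     = (if a = b then (\<Sum>k<d. if k \<noteq> a then complex_of_real (p a k) * \<rho> $$ (k,k) else 0) else 0)"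
    by (cases "a = b") simp_all
  show ?thesis
    using ab by (simp only: index_add_mat msum_dims s1 s2 s3 s4)
qed

lemma msum_empty: "msum d f {} = 0\<^sub>m d d"
  unfolding msum_def by (rule eq_matI) auto

lemma msum_insert:
  assumes "finite F" "x \<notin> F" "f x \<in> carrier_mat d d"
  shows "msum d f (insert x F) = f x + msum d f F"
  using assms by (intro eq_matI) (auto simp: msum_entry)

lemma lin_zero:
  assumes "linear_map d M" "\<forall>A\<in>carrier_mat d d. M A \<in> carrier_mat d d"
  shows "M (0\<^sub>m d d) = 0\<^sub>m d d"
proof -
  have c: "M (0\<^sub>m d d) \<in> carrier_mat d d" using assms(2) by simp
  have "M (0\<^sub>m d d) = M (0 \<cdot>\<^sub>m 0\<^sub>m d d)" by (metis smult_zero_mat)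
  also have "\<dots> = 0 \<cdot>\<^sub>m M (0\<^sub>m d d)" using assms(1) zero_carrier_mat unfolding linear_map_def by blast
  also have "\<dots> = 0\<^sub>m d d" using c by (intro eq_matI) auto
  finally show ?thesis .
qed

lemma lin_msum:
  assumes L: "linear_map d M" and C: "\<forall>A\<in>carrier_mat d d. M A \<in> carrier_mat d d"
    and F: "finite F" and f: "\<forall>x\<in>F. f x \<in> carrier_mat d d"
  shows "M (msum d f F) = msum d (\<lambda>x. M (f x)) F"
  using F f
proof (induction F rule: finite_induct)
  case empty
  then show ?case using lin_zero[OF L C] by (simp add: msum_empty)
next
  case (insert x F)
  have fx: "f x \<in> carrier_mat d d" using insert by simp
  have "M (msum d f (insert x F)) = M (f x + msum d f F)" using msum_insert[where f=f, OF insert(1,2) fx] by simp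
  also have "\<dots> = M (f x) + M (msum d f F)" using L fx unfolding linear_map_def by simp
  also have "\<dots> = M (f x) + msum d (\<lambda>x. M (f x)) F" using insert by simp
  also have "\<dots> = msum d (\<lambda>x. M (f x)) (insert x F)" using msum_insert[OF insert(1,2), of "\<lambda>x. M (f x)"] C fx by simp
  finally show ?case .
qed

lemma decomp:
  assumes R: "\<rho> \<in> carrier_mat d d"
  shows "\<rho> = msum d (\<lambda>(a,b). \<rho> $$ (a,b) \<cdot>\<^sub>m ketbra d a b) ({..<d} \<times> {..<d})"
proof (rule eq_matI)
  fix i j assume ij: "i < dim_row (msum d (\<lambda>(a,b). \<rho> $$ (a,b) \<cdot>\<^sub>m ketbra d a b) ({..<d} \<times> {..<d}))"
     "j < dim_col (msum d (\<lambda>(a,b). \<rho> $$ (a,b) \<cdot>\<^sub>m ketbra d a b) ({..<d} \<times> {..<d}))"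
  then have i: "i < d" and j: "j < d" by auto
  have "msum d (\<lambda>(a,b). \<rho> $$ (a,b) \<cdot>\<^sub>m ketbra d a b) ({..<d} \<times> {..<d}) $$ (i,j)
     = (\<Sum>a<d. \<Sum>b<d. \<rho> $$ (a,b) * (if i = a \<and> j = b then 1 else 0))"
    unfolding msum_entry[OF i j] sum.cartesian_product
    by (intro sum.cong refl) (clarsimp simp: ketbra_entry i j)
  also have "\<dots> = \<rho> $$ (i,j)"
    by (subst sum_single[OF i]; simp) (subst sum_single[OF j]; simp)
  finally show "\<rho> $$ (i,j) = msum d (\<lambda>(a,b). \<rho> $$ (a,b) \<cdot>\<^sub>m ketbra d a b) ({..<d} \<times> {..<d}) $$ (i,j)" ..
qed (use R in auto)

lemma M_entry:
  assumes L: "linear_map d M" and C: "\<forall>A\<in>carrier_mat d d. M A \<in> carrier_mat d d"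
    and R: "\<rho> \<in> carrier_mat d d" and ij: "i < d" "j < d"
  shows "M \<rho> $$ (i,j) = (\<Sum>a<d. \<Sum>b<d. \<rho> $$ (a,b) * M (ketbra d a b) $$ (i,j))"
proof -
  have "M \<rho> = M (msum d (\<lambda>(a,b). \<rho> $$ (a,b) \<cdot>\<^sub>m ketbra d a b) ({..<d} \<times> {..<d}))"
    using decomp[OF R] by simp
  also have "\<dots> = msum d (\<lambda>x. M ((\<lambda>(a,b). \<rho> $$ (a,b) \<cdot>\<^sub>m ketbra d a b) x)) ({..<d} \<times> {..<d})"
    by (rule lin_msum[OF L C]) auto
  finally have e: "M \<rho> $$ (i,j) = (\<Sum>x\<in>{..<d} \<times> {..<d}. M ((\<lambda>(a,b). \<rho> $$ (a,b) \<cdot>\<^sub>m ketbra d a b) x) $$ (i,j))"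
    by (simp add: msum_entry ij)
  have sc: "M (c \<cdot>\<^sub>m ketbra d a b) = c \<cdot>\<^sub>m M (ketbra d a b)" for c a b
    using L unfolding linear_map_def by simp
  have cc: "dim_row (M (ketbra d a b)) = d" "dim_col (M (ketbra d a b)) = d" for a b
  proof -
    have "M (ketbra d a b) \<in> carrier_mat d d" using C ketbra_carrier[of d a b] by blast
    then show "dim_row (M (ketbra d a b)) = d" "dim_col (M (ketbra d a b)) = d" by auto
  qed
  show ?thesis unfolding e sum.cartesian_product
    by (intro sum.cong refl) (use cc in \<open>clarsimp simp add: sc ij\<close>)
qed

lemma cis_cnj_1[simp]: "cis x * cnj (cis x) = 1"
  by (simp add: cis_cnj cis_mult)

lemma phase_choice:
  fixes i j a b :: nat
  assumes nt: "\<not> ((i = a \<and> j = b) \<or> (i = j \<and> a = b))"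
  shows "\<exists>s. (if i = s then \<i> else 1) * cnj (if j = s then \<i> else 1)
           \<noteq> (if a = s then \<i> else 1) * cnj (if b = s then \<i> else (1::complex))"
proof (cases "i = j")
  case True
  then have "a \<noteq> b" using nt by auto
  then show ?thesis using True by (intro exI[of _ a]) (auto simp: complex_eq_iff)
next
  case False
  show ?thesis
  proof (cases "a = i \<and> b \<noteq> i")
    case True
    then have "j \<noteq> b" using nt by auto
    then show ?thesis using True False by (intro exI[of _ j]) (auto simp: complex_eq_iff)
  next
    case F2: False
    then show ?thesis using False by (intro exI[of _ i]) (auto simp: complex_eq_iff)
  qed
qed

lemma cov_zero:
  assumes cov: "multiphase_covariant d M" and L: "linear_map d M"
    and C: "\<forall>A\<in>carrier_mat d d. M A \<in> carrier_mat d d"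
    and idx: "a < d" "b < d" "i < d" "j < d"
    and nt: "\<not> ((i = a \<and> j = b) \<or> (i = j \<and> a = b))"
  shows "M (ketbra d a b) $$ (i,j) = 0"
proof -
  obtain s where s: "(if i = s then \<i> else 1) * cnj (if j = s then \<i> else 1)
           \<noteq> (if a = s then \<i> else 1) * cnj (if b = s then \<i> else (1::complex))"
    using phase_choice[OF nt] by blast
  define \<theta> where "\<theta> = (\<lambda>k::nat. if k = s then pi/2 else (0::real))"
  have ce: "cis (\<theta> k) = (if k = s then \<i> else 1)" for k unfolding \<theta>_def by simp
  have rng: "\<forall>k<d. 0 \<le> \<theta> k \<and> \<theta> k < 2*pi" unfolding \<theta>_def using pi_gt_zero by auto
  let ?U = "phaseU d \<theta>"
  let ?X = "M (ketbra d a b)"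
  have Xc: "?X \<in> carrier_mat d d" using C by simp
  have 1: "?U * ?X * dag ?U = M (?U * ketbra d a b * dag ?U)"
    using cov rng unfolding multiphase_covariant_def by simp
  let ?c = "cis (\<theta> a) * cnj (cis (\<theta> b))"
  have 2: "?U * ketbra d a b * dag ?U = ?c \<cdot>\<^sub>m ketbra d a b"
  proof (rule eq_matI)
    fix x y assume "x < dim_row (?c \<cdot>\<^sub>m ketbra d a b)" "y < dim_col (?c \<cdot>\<^sub>m ketbra d a b)"
    then have xy: "x < d" "y < d" by auto
    show "(?U * ketbra d a b * dag ?U) $$ (x,y) = (?c \<cdot>\<^sub>m ketbra d a b) $$ (x,y)"
      using phase_conj[OF ketbra_carrier xy, of \<theta> a b] xy by (simp add: ketbra_entry)
  qed simp_all
  have 3: "M (?c \<cdot>\<^sub>m ketbra d a b) = ?c \<cdot>\<^sub>m ?X"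
    using L unfolding linear_map_def by simp
  have "(?U * ?X * dag ?U) $$ (i,j) = (?c \<cdot>\<^sub>m ?X) $$ (i,j)" using 1 2 3 by simp
  then have "cis (\<theta> i) * ?X $$ (i,j) * cnj (cis (\<theta> j)) = ?c * ?X $$ (i,j)"
    using phase_conj[OF Xc idx(3,4)] Xc idx by simp
  then have "?X $$ (i,j) * (cis (\<theta> i) * cnj (cis (\<theta> j)) - ?c) = 0"
    by (simp add: algebra_simps)
  then show ?thesis using s unfolding ce by simp
qed

lemma sum_dd: "(\<Sum>r<d*d. g r) = (\<Sum>a<d. \<Sum>i<(d::nat). (g (a*d+i)::complex))"
proof -
  have "(\<Sum>r<d*d. g r) = (\<Sum>a<d. sum g {a*d..<a*d+d})" by (rule sum.nat_group[symmetric])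
  also have "\<dots> = (\<Sum>a<d. \<Sum>i<d. g (a*d+i))"
  proof (rule sum.cong[OF refl])
    fix a assume "a \<in> {..<d}"
    show "sum g {a*d..<a*d+d} = (\<Sum>i<d. g (a*d+i))"
      using sum.shift_bounds_nat_ivl[of g 0 "a*d" d] by (simp add: atLeast0LessThan add.commute)
  qed
  finally show ?thesis .
qed
lemma dm: "i < d \<Longrightarrow> (a*d+i) div d = a \<and> (a*d+i) mod (d::nat) = i"
  by simp
lemma idx_lt: "a < d \<Longrightarrow> i < d \<Longrightarrow> a*d+i < d*(d::nat)"
proof -
  assume "a < d" "i < d"
  then have "a*d+i < Suc a * d" by simp
  also have "\<dots> \<le> d * d" using mult_le_mono1[of "Suc a" d d] \<open>a<d\<close> by simp
  finally show ?thesis .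
qed

lemma choi:
  assumes CP: "completely_positive d M" and d: "d > 0"
  shows "psdf d (\<lambda>a b. M (ketbra d a b) $$ (a,b))"
    and "\<And>j k. j < d \<Longrightarrow> k < d \<Longrightarrow> Im (M (ketbra d k k) $$ (j,j)) = 0 \<and> Re (M (ketbra d k k) $$ (j,j)) \<ge> 0"
proof -
  define P where "P = (\<lambda>r::nat. r mod d = r div d)"
  define X where "X = mat (d*d) (d*d) (\<lambda>(r,c). if P r \<and> P c then (1::complex) else 0)"
  have psdX: "psd (d*d) X"
    unfolding psd_def Let_def
  proof (intro conjI allI)
    show "X \<in> carrier_mat (d*d) (d*d)" unfolding X_def by simp
    fix v :: "nat \<Rightarrow> complex"
    define S where "S = (\<Sum>c<d*d. if P c then v c else 0)"
    have q: "(\<Sum>i<d*d. \<Sum>j<d*d. cnj (v i) * X $$ (i,j) * v j) = cnj S * S"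
    proof -
      have "(\<Sum>i<d*d. \<Sum>j<d*d. cnj (v i) * X $$ (i,j) * v j)
          = (\<Sum>i<d*d. \<Sum>j<d*d. (if P i then cnj (v i) else 0) * (if P j then v j else 0))"
        unfolding X_def by (intro sum.cong refl) auto
      also have "\<dots> = (\<Sum>i<d*d. if P i then cnj (v i) else 0) * S"
        unfolding S_def by (simp add: sum_product)
      also have "(\<Sum>i<d*d. if P i then cnj (v i) else 0) = cnj S"
        unfolding S_def cnj_sum by (intro sum.cong refl) auto
      finally show ?thesis .
    qed
    show "Im (\<Sum>i<d*d. \<Sum>j<d*d. cnj (v i) * X $$ (i,j) * v j) = 0" unfolding q by simp
    show "Re (\<Sum>i<d*d. \<Sum>j<d*d. cnj (v i) * X $$ (i,j) * v j) \<ge> 0" unfolding q by simp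
  qed
  define Cm where "Cm = ampl d d M X"
  have psdC: "psd (d*d) Cm" using CP psdX d unfolding completely_positive_def Cm_def by blast
  define Cf where "Cf = (\<lambda>r c. Cm $$ (r,c))"
  have pC: "psdf (d*d) Cf" using psdC unfolding psd_def psdf_def Let_def Qf_def Cf_def by blast
  have blk: "mat d d (\<lambda>(i',j'). X $$ (a*d+i', b*d+j')) = ketbra d a b" if "a < d" "b < d" for a b
  proof (rule eq_matI)
    fix i' j' assume "i' < dim_row (ketbra d a b)" "j' < dim_col (ketbra d a b)"
    then have ij: "i' < d" "j' < d" by auto
    have lt: "a*d+i' < d*d" "b*d+j' < d*d" using idx_lt that ij by auto
    show "mat d d (\<lambda>(i',j'). X $$ (a*d+i', b*d+j')) $$ (i',j') = ketbra d a b $$ (i',j')"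
      using ij lt dm[OF ij(1), of a] dm[OF ij(2), of b] unfolding X_def P_def
      by (auto simp: ketbra_entry)
  qed auto
  have entry: "Cf (a*d+i) (b*d+j) = M (ketbra d a b) $$ (i,j)" if "a < d" "b < d" "i < d" "j < d" for a b i j
  proof -
    have lt: "a*d+i < d*d" "b*d+j < d*d" using idx_lt that by auto
    show ?thesis unfolding Cf_def Cm_def ampl_def
      using lt dm[OF that(3), of a] dm[OF that(4), of b] blk[OF that(1,2)] by simp
  qed
  show "Im (M (ketbra d k k) $$ (j,j)) = 0 \<and> Re (M (ketbra d k k) $$ (j,j)) \<ge> 0" if "j < d" "k < d" for j k
    using psdf_diag[OF pC idx_lt[OF that(2,1)]] entry[OF that(2,2,1,1)] by simp
  show "psdf d (\<lambda>a b. M (ketbra d a b) $$ (a,b))"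
    unfolding psdf_def
  proof
    fix w :: "nat \<Rightarrow> complex"
    define v where "v = (\<lambda>r. if r mod d = r div d then w (r div d) else 0)"
    have vv: "v (a*d+i) = (if i = a then w a else 0)" if "i < d" for a i
      unfolding v_def using dm[OF that, of a] by auto
    have inner: "(\<Sum>c<d*d. cnj (v r) * Cf r c * v c) = (\<Sum>b<d. cnj (v r) * Cf r (b*d+b) * w b)" for r
    proof -
      have "(\<Sum>c<d*d. cnj (v r) * Cf r c * v c) = (\<Sum>b<d. \<Sum>j<d. cnj (v r) * Cf r (b*d+j) * v (b*d+j))"
        by (rule sum_dd)
      also have "\<dots> = (\<Sum>b<d. cnj (v r) * Cf r (b*d+b) * w b)"
      proof (rule sum.cong[OF refl])
        fix b assume b: "b \<in> {..<d}"
        show "(\<Sum>j<d. cnj (v r) * Cf r (b*d+j) * v (b*d+j)) = cnj (v r) * Cf r (b*d+b) * w b"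
          by (subst sum_single[of b]) (use b vv in auto)
      qed
      finally show ?thesis .
    qed
    have "Qf (d*d) Cf v = (\<Sum>r<d*d. \<Sum>b<d. cnj (v r) * Cf r (b*d+b) * w b)"
      unfolding Qf_def inner ..
    also have "\<dots> = (\<Sum>a<d. \<Sum>i<d. \<Sum>b<d. cnj (v (a*d+i)) * Cf (a*d+i) (b*d+b) * w b)"
      by (rule sum_dd)
    also have "\<dots> = (\<Sum>a<d. \<Sum>b<d. cnj (w a) * Cf (a*d+a) (b*d+b) * w b)"
    proof (rule sum.cong[OF refl])
      fix a assume a: "a \<in> {..<d}"
      show "(\<Sum>i<d. \<Sum>b<d. cnj (v (a*d+i)) * Cf (a*d+i) (b*d+b) * w b) = (\<Sum>b<d. cnj (w a) * Cf (a*d+a) (b*d+b) * w b)"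
        by (subst sum_single[of a]) (use a vv in auto)
    qed
    also have "\<dots> = Qf d (\<lambda>a b. M (ketbra d a b) $$ (a,b)) w"
      unfolding Qf_def by (intro sum.cong refl) (simp add: entry)
    finally have "Qf (d*d) Cf v = Qf d (\<lambda>a b. M (ketbra d a b) $$ (a,b)) w" .
    moreover have "Im (Qf (d*d) Cf v) = 0 \<and> Re (Qf (d*d) Cf v) \<ge> 0" using pC unfolding psdf_def by blast
    ultimately show "Im (Qf d (\<lambda>a b. M (ketbra d a b) $$ (a,b)) w) = 0 \<and> Re (Qf d (\<lambda>a b. M (ketbra d a b) $$ (a,b)) w) \<ge> 0"
      by simp
  qed
qed

lemma cis_sandwich: "cis x * y * cnj (cis x) = y"
proof -
  have "cis x * y * cnj (cis x) = y * (cis x * cnj (cis x))" by (simp add: ac_simps)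
  then show ?thesis by simp
qed

theorem mainTheorem8:
  fixes d :: nat and \<M> :: "complex mat \<Rightarrow> complex mat"
  assumes "quantum_channel d \<M>"
  shows "multiphase_covariant d \<M> \<longleftrightarrow>
    (\<exists>(r::nat) (Ms :: nat \<Rightarrow> complex mat) (p :: nat \<Rightarrow> nat \<Rightarrow> real).
       (\<forall>i<r. Ms i \<in> carrier_mat d d \<and> diagonal_mat (Ms i)) \<and>
       (\<forall>j<d. \<forall>k<d. j \<noteq> k \<longrightarrow> p j k \<ge> 0) \<and>
       (\<forall>\<rho>\<in>carrier_mat d d.
          \<M> \<rho> = msum d (\<lambda>i. Ms i * \<rho> * dag (Ms i)) {..<r}
                + msum d (\<lambda>(k,j). complex_of_real (p j k) \<cdot>\<^sub>m
                      (ketbra d j k * \<rho> * ketbra d k j))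
                    {(k,j). k < d \<and> j < d \<and> j \<noteq> k}))"
proof -
  have C: "\<forall>A\<in>carrier_mat d d. \<M> A \<in> carrier_mat d d" and L: "linear_map d \<M>"
    and CP: "completely_positive d \<M>"
    using assms unfolding quantum_channel_def by auto
  show ?thesis
  proof
    assume cov: "multiphase_covariant d \<M>"
    define A where "A = (\<lambda>a b. \<M> (ketbra d a b) $$ (a,b))"
    have psdA: "psdf d A"
    proof (cases "d = 0")
      case True then show ?thesis unfolding psdf_def Qf_def by simp
    next
      case False then show ?thesis unfolding A_def using choi(1)[OF CP] by simp
    qed
    have diagc: "Im (\<M> (ketbra d k k) $$ (j,j)) = 0 \<and> Re (\<M> (ketbra d k k) $$ (j,j)) \<ge> 0"
      if "j < d" "k < d" for j k
      using choi(2)[OF CP _ that] that by simp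
    obtain r :: nat and m where rm: "\<forall>a<d. \<forall>b<d. A a b = (\<Sum>i<r. m i a * cnj (m i b))"
      using gram[OF psdA] by (elim exE) blast
    define Ms where "Ms = (\<lambda>i. mat d d (\<lambda>(a,b). if a = b then m i a else 0))"
    define p where "p = (\<lambda>j k. Re (\<M> (ketbra d k k) $$ (j,j)))"
    have Msc: "\<forall>i<r. Ms i \<in> carrier_mat d d \<and> diagonal_mat (Ms i)"
      unfolding Ms_def diagonal_mat_def by simp
    have pnn: "\<forall>j<d. \<forall>k<d. j \<noteq> k \<longrightarrow> p j k \<ge> 0"
      unfolding p_def using diagc by simp
    have pof: "complex_of_real (p j k) = \<M> (ketbra d k k) $$ (j,j)" if "j < d" "k < d" for j k
      unfolding p_def using diagc[OF that] by (simp add: complex_eq_iff)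
    have rep: "\<M> \<rho> = msum d (\<lambda>i. Ms i * \<rho> * dag (Ms i)) {..<r}
                + msum d (\<lambda>(k,j). complex_of_real (p j k) \<cdot>\<^sub>m
                      (ketbra d j k * \<rho> * ketbra d k j))
                    {(k,j). k < d \<and> j < d \<and> j \<noteq> k}" if R: "\<rho> \<in> carrier_mat d d" for \<rho>
    proof (rule eq_matI)
      fix a b assume "a < dim_row (msum d (\<lambda>i. Ms i * \<rho> * dag (Ms i)) {..<r}
                + msum d (\<lambda>(k,j). complex_of_real (p j k) \<cdot>\<^sub>m
                      (ketbra d j k * \<rho> * ketbra d k j))
                    {(k,j). k < d \<and> j < d \<and> j \<noteq> k})"
          "b < dim_col (msum d (\<lambda>i. Ms i * \<rho> * dag (Ms i)) {..<r}
                + msum d (\<lambda>(k,j). complex_of_real (p j k) \<cdot>\<^sub>m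
                      (ketbra d j k * \<rho> * ketbra d k j))
                    {(k,j). k < d \<and> j < d \<and> j \<noteq> k})"
      then have ab: "a < d" "b < d" by auto
      have sA: "(\<Sum>i<r. Ms i $$ (a,a) * cnj (Ms i $$ (b,b))) = A a b"
        using rm ab unfolding Ms_def by simp
      have T: "(\<Sum>k<d. if k \<noteq> a then complex_of_real (p a k) * \<rho> $$ (k,k) else 0)
          = (\<Sum>k<d. if k \<noteq> a then \<rho> $$ (k,k) * \<M> (ketbra d k k) $$ (a,a) else 0)"
        by (intro sum.cong refl) (simp add: pof ab)
      have trm: "\<rho> $$ (x,y) * \<M> (ketbra d x y) $$ (a,b) =
          (if x = a \<and> y = b then \<rho> $$ (a,b) * A a b else 0)
          + (if a = b \<and> x = y \<and> x \<noteq> a then \<rho> $$ (x,x) * \<M> (ketbra d x x) $$ (a,a) else 0)"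
        if xy: "x < d" "y < d" for x y
      proof (cases "(a = x \<and> b = y) \<or> (a = b \<and> x = y)")
        case True
        then show ?thesis unfolding A_def by auto
      next
        case False
        then have "\<M> (ketbra d x y) $$ (a,b) = 0" by (intro cov_zero[OF cov L C xy ab]) 
        then show ?thesis using False by auto
      qed
      have "\<M> \<rho> $$ (a,b) = (\<Sum>x<d. \<Sum>y<d. \<rho> $$ (x,y) * \<M> (ketbra d x y) $$ (a,b))"
        by (rule M_entry[OF L C R ab])
      also have "\<dots> = (\<Sum>x<d. \<Sum>y<d. (if x = a \<and> y = b then \<rho> $$ (a,b) * A a b else 0))
          + (\<Sum>x<d. \<Sum>y<d. (if a = b \<and> x = y \<and> x \<noteq> a then \<rho> $$ (x,x) * \<M> (ketbra d x x) $$ (a,a) else 0))"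
        by (simp add: trm sum.distrib)
      also have "(\<Sum>x<d. \<Sum>y<d. (if x = a \<and> y = b then \<rho> $$ (a,b) * A a b else 0)) = \<rho> $$ (a,b) * A a b"
      proof -
        have "(\<Sum>y<d. (if x = a \<and> y = b then \<rho> $$ (a,b) * A a b else 0)) = (if x = a then \<rho> $$ (a,b) * A a b else 0)" for x
          using ab by (cases "x = a") simp_all
        then show ?thesis using ab by simp
      qed
      also have "(\<Sum>x<d. \<Sum>y<d. (if a = b \<and> x = y \<and> x \<noteq> a then \<rho> $$ (x,x) * \<M> (ketbra d x x) $$ (a,a) else 0))
           = (\<Sum>x<d. (if a = b \<and> x \<noteq> a then \<rho> $$ (x,x) * \<M> (ketbra d x x) $$ (a,a) else 0))"
      proof (rule sum.cong[OF refl])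
        fix x assume x: "x \<in> {..<d}"
        show "(\<Sum>y<d. (if a = b \<and> x = y \<and> x \<noteq> a then \<rho> $$ (x,x) * \<M> (ketbra d x x) $$ (a,a) else 0))
           = (if a = b \<and> x \<noteq> a then \<rho> $$ (x,x) * \<M> (ketbra d x x) $$ (a,a) else 0)"
          by (subst sum_single[of x]) (use x in auto)
      qed
      also have "(\<Sum>x<d. (if a = b \<and> x \<noteq> a then \<rho> $$ (x,x) * \<M> (ketbra d x x) $$ (a,a) else 0))
          = (if a = b then (\<Sum>k<d. if k \<noteq> a then complex_of_real (p a k) * \<rho> $$ (k,k) else 0) else 0)"
        unfolding T by (cases "a = b") simp_all
      finally show "\<M> \<rho> $$ (a,b) = (msum d (\<lambda>i. Ms i * \<rho> * dag (Ms i)) {..<r}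
                + msum d (\<lambda>(k,j). complex_of_real (p j k) \<cdot>\<^sub>m
                      (ketbra d j k * \<rho> * ketbra d k j))
                    {(k,j). k < d \<and> j < d \<and> j \<noteq> k}) $$ (a,b)"
        unfolding rep_entry[OF Msc R ab] sA by (simp add: mult.commute)
    qed (use C R in auto)
    show "\<exists>(r::nat) (Ms :: nat \<Rightarrow> complex mat) (p :: nat \<Rightarrow> nat \<Rightarrow> real).
       (\<forall>i<r. Ms i \<in> carrier_mat d d \<and> diagonal_mat (Ms i)) \<and>
       (\<forall>j<d. \<forall>k<d. j \<noteq> k \<longrightarrow> p j k \<ge> 0) \<and>
       (\<forall>\<rho>\<in>carrier_mat d d.
          \<M> \<rho> = msum d (\<lambda>i. Ms i * \<rho> * dag (Ms i)) {..<r}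
                + msum d (\<lambda>(k,j). complex_of_real (p j k) \<cdot>\<^sub>m
                      (ketbra d j k * \<rho> * ketbra d k j))
                    {(k,j). k < d \<and> j < d \<and> j \<noteq> k})"
      using Msc pnn rep by blast
  next
    assume "\<exists>(r::nat) (Ms :: nat \<Rightarrow> complex mat) (p :: nat \<Rightarrow> nat \<Rightarrow> real).
       (\<forall>i<r. Ms i \<in> carrier_mat d d \<and> diagonal_mat (Ms i)) \<and>
       (\<forall>j<d. \<forall>k<d. j \<noteq> k \<longrightarrow> p j k \<ge> 0) \<and>
       (\<forall>\<rho>\<in>carrier_mat d d.
          \<M> \<rho> = msum d (\<lambda>i. Ms i * \<rho> * dag (Ms i)) {..<r}
                + msum d (\<lambda>(k,j). complex_of_real (p j k) \<cdot>\<^sub>m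
                      (ketbra d j k * \<rho> * ketbra d k j))
                    {(k,j). k < d \<and> j < d \<and> j \<noteq> k})"
    then obtain r :: nat and Ms :: "nat \<Rightarrow> complex mat" and p :: "nat \<Rightarrow> nat \<Rightarrow> real" where
      Msc: "\<forall>i<r. Ms i \<in> carrier_mat d d \<and> diagonal_mat (Ms i)" and
      rep: "\<forall>\<rho>\<in>carrier_mat d d.
          \<M> \<rho> = msum d (\<lambda>i. Ms i * \<rho> * dag (Ms i)) {..<r}
                + msum d (\<lambda>(k,j). complex_of_real (p j k) \<cdot>\<^sub>m
                      (ketbra d j k * \<rho> * ketbra d k j))
                    {(k,j). k < d \<and> j < d \<and> j \<noteq> k}"
      by blast
    have ent: "\<M> \<rho> $$ (a,b) = (\<Sum>i<r. Ms i $$ (a,a) * cnj (Ms i $$ (b,b))) * \<rho> $$ (a,b)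
     + (if a = b then (\<Sum>k<d. if k \<noteq> a then complex_of_real (p a k) * \<rho> $$ (k,k) else 0) else 0)"
      if "\<rho> \<in> carrier_mat d d" "a < d" "b < d" for \<rho> a b
      using rep_entry[OF Msc that, of p] rep that(1) by simp
    show "multiphase_covariant d \<M>"
      unfolding multiphase_covariant_def
    proof (intro allI impI ballI)
      fix \<theta> :: "nat \<Rightarrow> real" and \<rho> :: "complex mat" assume R: "\<rho> \<in> carrier_mat d d"
      let ?U = "phaseU d \<theta>"
      let ?r = "?U * \<rho> * dag ?U"
      have R': "?r \<in> carrier_mat d d" using R by simp
      have MR: "\<M> \<rho> \<in> carrier_mat d d" "\<M> ?r \<in> carrier_mat d d" using C R R' by auto
      show "?U * \<M> \<rho> * dag ?U = \<M> ?r"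
      proof (rule eq_matI)
        fix a b assume "a < dim_row (\<M> ?r)" "b < dim_col (\<M> ?r)"
        then have ab: "a < d" "b < d" using MR by auto
        let ?S = "\<Sum>i<r. Ms i $$ (a,a) * cnj (Ms i $$ (b,b))"
        have T: "(\<Sum>k<d. if k \<noteq> a then complex_of_real (p a k) * ?r $$ (k,k) else 0)
           = (\<Sum>k<d. if k \<noteq> a then complex_of_real (p a k) * \<rho> $$ (k,k) else 0)"
          by (intro sum.cong refl) (simp del: index_mult_mat add: phase_conj[OF R] cis_sandwich)
        have "(?U * \<M> \<rho> * dag ?U) $$ (a,b) = cis (\<theta> a) * \<M> \<rho> $$ (a,b) * cnj (cis (\<theta> b))"
          by (rule phase_conj[OF MR(1) ab])
        also have "\<dots> = \<M> ?r $$ (a,b)"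
          unfolding ent[OF R ab] ent[OF R' ab] T phase_conj[OF R ab]
          by (cases "a = b") (simp_all add: cis_sandwich algebra_simps)
        finally show "(?U * \<M> \<rho> * dag ?U) $$ (a,b) = \<M> ?r $$ (a,b)" .
      qed (use MR in auto)
    qed
  qed
qed

end
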